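(* Let $d\ge 2$, $1\le s<q\le d$. Let $\mathbf{p}_1,\dots,\mathbf{p}_s\in\mathbb{R}^d$ be fixed orthonormal vectors and let $P^\perp$ denote the orthogonal projection onto the $(d-s)$-dimensional orthogonal complement of $\operatorname{span}\{\mathbf{p}_1,\dots,\mathbf{p}_s\}$. Let $\mathbf{r}_1,\dots,\mathbf{r}_{q-s}$ be independent standard Gaussian vectors in $\mathbb{R}^d$, and let $\mathbf{u}_1,\dots,\mathbf{u}_{q-s}$ be obtained by applying Gram–Schmidt orthogonalization to the ordered list $(\mathbf{p}_1,\dots,\mathbf{p}_s,\mathbf{r}_1,\dots,\mathbf{r}_{q-s})$ and keeping the last $q-s$ output vectors. Let $\mathbf{g}\in\mathbb{R}^d$ be fixed with $P^\perp\mathbf{g}\neq 0$, and set $\mathbf{v}:=\frac{1}{\sqrt{q-s}}\sum_{i=1}^{q-s}\operatorname{sign}(\mathbf{g}^\top\mathbf{u}_i)\,\mathbf{u}_i$. Then $$g_2:=\frac{d-s}{\frac{2}{\pi}(q-s-1)+1}\,(\mathbf{g}^\top\mathbf{v})\,\mathbf{v}+\sum_{i=1}^s(\mathbf{g}^\top\mathbf{p}_i)\,\mathbf{p}_i$$ satisfies $\mathbb{E}[g_2]=\mathbf{g}$.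
   Context: $\operatorname{sign}(a)=+1$ if $a>0$, $-1$ if $a<0$ (ties occur with probability zero). The Gram–Schmidt output is well defined almost surely. *)

theory Defs
  imports "HOL-Probability.Probability"
begin

fun gram_schmidt_aux :: "('a::real_inner) list \<Rightarrow> 'a list \<Rightarrow> 'a list" where
  "gram_schmidt_aux us [] = us"
| "gram_schmidt_aux us (x # xs) =
     (let w = x - sum_list (map (\<lambda>u. (x \<bullet> u) *\<^sub>R u) us)
      in gram_schmidt_aux (us @ [(1 / norm w) *\<^sub>R w]) xs)"

definition gram_schmidt :: "('a::real_inner) list \<Rightarrow> 'a list" where
  "gram_schmidt xs = gram_schmidt_aux [] xs"

definition std_gauss_vec :: "(real ^ 'n::finite) measure" where
  "std_gauss_vec = density lborel (\<lambda>x. ennreal (\<Prod>i\<in>UNIV. std_normal_density (x $ i)))"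

definition perp_proj :: "nat \<Rightarrow> (nat \<Rightarrow> real ^ 'n::finite) \<Rightarrow> real ^ 'n \<Rightarrow> real ^ 'n" where
  "perp_proj s p g = g - (\<Sum>i<s. (g \<bullet> p i) *\<^sub>R p i)"

end

theory Submission
  imports Defs
begin


lemma sl_map: "sum_list (map f us) = (\<Sum>i<length us. f (us ! i))"
  by (simp add: sum_list_sum_nth atLeast0LessThan)

lemma gsa_append: "gram_schmidt_aux us (xs @ ys) = gram_schmidt_aux (gram_schmidt_aux us xs) ys"
  by (induction xs arbitrary: us) (simp_all add: Let_def)

lemma gsa_length: "length (gram_schmidt_aux us xs) = length us + length xs"
  by (induction xs arbitrary: us) (simp_all add: Let_def)

lemma gsa_prefix: "j < length us \<Longrightarrow> gram_schmidt_aux us xs ! j = us ! j"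
  by (induction xs arbitrary: us) (simp_all add: Let_def nth_append)

definition oz :: "('a::real_inner) list \<Rightarrow> bool" where
  "oz L \<longleftrightarrow> (\<forall>i<length L. \<forall>j<length L. i \<noteq> j \<longrightarrow> L!i \<bullet> L!j = 0) \<and> (\<forall>i<length L. L!i = 0 \<or> norm (L!i) = 1)"

lemma oz_self: "oz L \<Longrightarrow> i < length L \<Longrightarrow> L!i \<bullet> L!i = (if L!i = 0 then 0 else 1)"
  unfolding oz_def by (metis inner_zero_left norm_eq_sqrt_inner real_sqrt_eq_1_iff)

lemma oz_step:
  fixes x :: "'a::real_inner"
  assumes "oz us"
  defines "w \<equiv> x - sum_list (map (\<lambda>u. (x \<bullet> u) *\<^sub>R u) us)"
  shows "oz (us @ [(1 / norm w) *\<^sub>R w])" and "\<And>j. j < length us \<Longrightarrow> w \<bullet> us!j = 0"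
proof -
  show wo: "w \<bullet> us!j = 0" if "j < length us" for j
  proof -
    have "w \<bullet> us!j = x \<bullet> us!j - (\<Sum>i<length us. (x \<bullet> us!i) * (us!i \<bullet> us!j))"
      by (simp add: w_def sl_map inner_diff_left inner_sum_left)
    also have "(\<Sum>i<length us. (x \<bullet> us!i) * (us!i \<bullet> us!j)) = (x \<bullet> us!j) * (us!j \<bullet> us!j)"
      using that assms(1) unfolding oz_def
      by (subst sum.remove[of _ j]) (auto intro!: sum.neutral)
    finally show ?thesis using oz_self[OF assms(1) that] by auto
  qed
  let ?e = "(1 / norm w) *\<^sub>R w"
  have e: "?e \<bullet> us!j = 0" if "j < length us" for j using wo[OF that] by simp
  have en: "?e = 0 \<or> norm ?e = 1" by (cases "w = 0") auto
  show "oz (us @ [?e])"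
    using assms(1) e en unfolding oz_def
    apply (auto simp: nth_append less_Suc_eq)
    by (metis inner_commute less_antisym)+
qed

lemma oz_gsa: "oz us \<Longrightarrow> oz (gram_schmidt_aux us xs)"
  by (induction xs arbitrary: us) (auto simp: Let_def oz_step)

lemma oz_Nil: "oz []" by (simp add: oz_def)

lemma gsa_single: "gram_schmidt_aux us [x] ! length us =
   (let w = x - sum_list (map (\<lambda>u. (x \<bullet> u) *\<^sub>R u) us) in (1 / norm w) *\<^sub>R w)"
  by (simp add: Let_def)

lemma gsa_zero_span:
  assumes "gram_schmidt_aux us (x # xs) ! length us = 0"
  shows "x \<in> span (set us)"
proof -
  define w where "w = x - sum_list (map (\<lambda>u. (x \<bullet> u) *\<^sub>R u) us)"
  have "gram_schmidt_aux us (x # xs) ! length us = gram_schmidt_aux us ([x] @ xs) ! length us" by simp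
  also have "\<dots> = gram_schmidt_aux us [x] ! length us"
    by (subst gsa_append, rule gsa_prefix) (simp add: Let_def)
  finally have "(1 / norm w) *\<^sub>R w = 0" using assms by (simp add: w_def Let_def)
  then have "w = 0" by (cases "w = 0") auto
  then have "x = sum_list (map (\<lambda>u. (x \<bullet> u) *\<^sub>R u) us)" by (simp add: w_def)
  also have "\<dots> \<in> span (set us)"
    unfolding sl_map by (intro span_sum span_scale span_base) auto
  finally show ?thesis .
qed

lemma gsa_orthonormal:
  assumes "\<forall>i<s. \<forall>j<s. p i \<bullet> p j = (if i = j then 1 else 0)"
  shows "gram_schmidt_aux [] (map p [0..<s]) = map p [0..<s]"
  using assms
proof (induction s)
  case 0 then show ?case by simp
next
  case (Suc s)
  have IH: "gram_schmidt_aux [] (map p [0..<s]) = map p [0..<s]" using Suc by auto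
  have w: "p s - sum_list (map (\<lambda>u. (p s \<bullet> u) *\<^sub>R u) (map p [0..<s])) = p s"
    using Suc.prems by (auto simp: sl_map intro!: sum.neutral)
  have n: "norm (p s) = 1" using Suc.prems by (simp add: norm_eq_sqrt_inner)
  show ?case using IH w n by (simp add: gsa_append Let_def)
qed

lemma gsa_equiv:
  fixes f :: "'a::real_inner \<Rightarrow> 'a"
  assumes lin: "linear f" and ip: "\<And>x y. f x \<bullet> f y = x \<bullet> y"
  shows "gram_schmidt_aux (map f us) (map f xs) = map f (gram_schmidt_aux us xs)"
proof (induction xs arbitrary: us)
  case Nil then show ?case by simp
next
  case (Cons x xs)
  define w where "w = x - sum_list (map (\<lambda>u. (x \<bullet> u) *\<^sub>R u) us)"
  have fw: "f x - sum_list (map ((\<lambda>u. (f x \<bullet> u) *\<^sub>R u) \<circ> f) us) = f w"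
    by (simp add: w_def sl_map ip linear_diff[OF lin] linear_sum[OF lin] linear_scale[OF lin])
  have nw: "norm (f w) = norm w" by (simp add: norm_eq_sqrt_inner ip)
  show ?case
    using Cons[of "us @ [(1 / norm w) *\<^sub>R w]"]
    by (simp add: Let_def fw nw w_def[symmetric] linear_scale[OF lin])
qed



typedef ('a::finite) wo = "{..<CARD('a)}" morphisms wo_rep wo_abs
  by (rule exI[of _ 0]) simp

instantiation wo :: (finite) linorder
begin
definition less_eq_wo :: "'a wo \<Rightarrow> 'a wo \<Rightarrow> bool" where "less_eq_wo x y \<longleftrightarrow> wo_rep x \<le> wo_rep y"
definition less_wo :: "'a wo \<Rightarrow> 'a wo \<Rightarrow> bool" where "less_wo x y \<longleftrightarrow> wo_rep x < wo_rep y"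
instance by standard (auto simp: less_eq_wo_def less_wo_def wo_rep_inject)
end
instance wo :: (finite) finite
proof
  have "(UNIV :: 'a wo set) = wo_abs ` {..<CARD('a)}" by (rule type_definition.univ[OF type_definition_wo])
  then show "finite (UNIV :: 'a wo set)" by (metis finite_imageI finite_lessThan)
qed

instance wo :: (finite) wellorder
proof
  fix P :: "'a wo \<Rightarrow> bool" and a
  assume step: "\<And>x. (\<And>y. y < x \<Longrightarrow> P y) \<Longrightarrow> P x"
  have "\<forall>x. wo_rep x = n \<longrightarrow> P x" for n
    by (induction n rule: less_induct) (metis less_wo_def step)
  then show "P a" by blast
qed

lemma card_wo: "CARD('a::finite wo) = CARD('a)"
proof -
  have "(UNIV :: 'a wo set) = wo_abs ` {..<CARD('a)}" by (rule type_definition.univ[OF type_definition_wo])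
  moreover have "inj_on (wo_abs :: nat \<Rightarrow> 'a wo) {..<CARD('a)}"
    by (metis inj_onI type_definition.Abs_inject[OF type_definition_wo])
  ultimately show ?thesis by (metis card_image card_lessThan)
qed

lemma prod_Basis_vec: "(\<Prod>b\<in>Basis. (v::real^'n) \<bullet> b) = (\<Prod>i\<in>UNIV. v $ i)"
proof -
  have B: "(Basis :: (real^'n) set) = (\<lambda>i. axis i 1) ` UNIV"
    by (auto simp: Basis_vec_def)
  have "inj (\<lambda>i::'n. axis i (1::real))" by (auto intro!: injI simp: axis_eq_axis)
  then show ?thesis unfolding B by (subst prod.reindex) (auto simp: inner_axis)
qed

lemma lborel_perm:
  fixes \<sigma> :: "'m::finite \<Rightarrow> 'n::finite"
  assumes "bij \<sigma>"
  shows "distr lborel borel (\<lambda>x::real^'n. \<chi> j. x $ \<sigma> j) = (lborel :: (real^'m) measure)"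
proof (rule lborel_eqI[symmetric])
  let ?\<Phi> = "\<lambda>x::real^'n. \<chi> j. x $ \<sigma> j"
  have lin: "linear ?\<Phi>" by (auto intro!: linearI simp: vec_eq_iff)
  have [measurable]: "?\<Phi> \<in> borel_measurable borel"
    by (intro borel_measurable_continuous_onI linear_continuous_on linear_conv_bounded_linear[THEN iffD1] lin)
  fix l u :: "real^'m"
  assume le: "\<And>b. b \<in> Basis \<Longrightarrow> l \<bullet> b \<le> u \<bullet> b"
  let ?l = "\<chi> i. l $ inv \<sigma> i" and ?u = "\<chi> i. u $ inv \<sigma> i"
  have pre: "?\<Phi> -` box l u = box ?l ?u"
    using assms by (auto simp: mem_box_cart bij_inv_eq_iff) (metis bij_inv_eq_iff)+
  have le': "\<forall>i. l $ i \<le> u $ i"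
  proof
    fix i show "l $ i \<le> u $ i" using le[of "axis i 1"] by (auto simp: Basis_vec_def inner_axis)
  qed
  have "(\<Prod>i\<in>UNIV. u $ inv \<sigma> i - l $ inv \<sigma> i) = (\<Prod>i\<in>UNIV. u $ i - l $ i)"
    using prod.reindex_bij_betw[of "inv \<sigma>" UNIV UNIV "\<lambda>i. u $ i - l $ i"] assms
    by (simp add: bij_betw_inv_into bij_imp_bij_inv)
  then show "emeasure (distr lborel borel ?\<Phi>) (box l u) = (\<Prod>b\<in>Basis. (u - l) \<bullet> b)"
  proof -
    have c1: "\<forall>b\<in>Basis. ?l \<bullet> b \<le> ?u \<bullet> b" using le' by (auto simp: Basis_vec_def inner_axis)
    have c2: "\<forall>b\<in>Basis. l \<bullet> b \<le> u \<bullet> b" using le' by (auto simp: Basis_vec_def inner_axis)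
    show ?thesis
      using c1 c2 \<open>(\<Prod>i\<in>UNIV. u $ inv \<sigma> i - l $ inv \<sigma> i) = _\<close>
      by (simp add: emeasure_distr pre emeasure_lborel_box_eq prod_Basis_vec del: vector_minus_component)
        (simp add: prod_Basis_vec[symmetric])
  qed
qed simp


lemma lin_meas: "linear (f :: 'a::euclidean_space \<Rightarrow> 'b::euclidean_space) \<Longrightarrow> f \<in> borel_measurable borel"
  by (intro borel_measurable_continuous_onI linear_continuous_on linear_conv_bounded_linear[THEN iffD1])

lemma lborel_orth_inv:
  fixes f :: "real^'n::finite \<Rightarrow> real^'n"
  assumes orth: "orthogonal_transformation f" and inv: "\<And>x. f (f x) = x"
  shows "distr lborel borel f = lborel"
proof -
  have "CARD('n wo) = CARD('n)" by (rule card_wo)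
  then obtain \<sigma> :: "'n wo \<Rightarrow> 'n" where bs: "bij_betw \<sigma> UNIV UNIV"
    using finite_same_card_bij[of "UNIV :: 'n wo set" "UNIV :: 'n set"] by auto
  then have bs': "bij \<sigma>" by (simp add: bij_betw_def)
  define \<Phi> where "\<Phi> = (\<lambda>x::real^'n. \<chi> j. x $ \<sigma> j)"
  define \<Psi> where "\<Psi> = (\<lambda>y::real^'n wo. \<chi> i. y $ inv \<sigma> i)"
  have PP: "\<Phi> (\<Psi> y) = y" for y using bs' by (simp add: \<Phi>_def \<Psi>_def vec_eq_iff bij_is_inj)
  have QQ: "\<Psi> (\<Phi> x) = x" for x using bs' by (simp add: \<Phi>_def \<Psi>_def vec_eq_iff bij_is_surj surj_f_inv_f)
  have linP: "linear \<Phi>" by (auto intro!: linearI simp: vec_eq_iff \<Phi>_def)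
  have linQ: "linear \<Psi>" by (auto intro!: linearI simp: vec_eq_iff \<Psi>_def)
  have linf: "linear f" using orth by (simp add: orthogonal_transformation_def)
  have [measurable]: "\<Phi> \<in> borel_measurable borel" "\<Psi> \<in> borel_measurable borel" "f \<in> borel_measurable borel"
    using linP linQ linf by (simp_all add: lin_meas)
  have dP: "distr lborel borel \<Phi> = lborel" unfolding \<Phi>_def by (rule lborel_perm[OF bs'])
  have nP: "norm (\<Phi> x) = norm x" for x
  proof -
    have "(\<Sum>j\<in>UNIV. (x $ \<sigma> j)\<^sup>2) = (\<Sum>i\<in>UNIV. (x $ i)\<^sup>2)"
      using sum.reindex_bij_betw[OF bs, of "\<lambda>i. (x $ i)\<^sup>2"] by simp
    then show ?thesis by (simp add: norm_vec_def L2_set_def \<Phi>_def)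
  qed
  have nQ: "norm (\<Psi> y) = norm y" for y using nP[of "\<Psi> y"] PP by simp
  define f' where "f' = \<Phi> \<circ> f \<circ> \<Psi>"
  have orth': "orthogonal_transformation f'"
    unfolding orthogonal_transformation f'_def
    using linP linQ linf orth
    by (auto intro!: linear_compose simp: nP nQ orthogonal_transformation_norm)
  have trans: "emeasure lborel S = emeasure lborel (\<Phi> ` S)" if "S \<in> sets borel" for S
  proof -
    have "\<Phi> ` S = \<Psi> -` S" using PP QQ by (auto simp: image_iff) (metis)
    then have "\<Phi> ` S \<in> sets borel" using that by (simp add: measurable_sets_borel[OF \<open>\<Psi> \<in> borel_measurable borel\<close>])
    then have "emeasure lborel (\<Phi> ` S) = emeasure lborel (\<Phi> -` (\<Phi> ` S))"
      by (subst dP[symmetric]) (simp add: emeasure_distr)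
    also have "\<Phi> -` (\<Phi> ` S) = S" using QQ by (auto simp: image_iff) (metis)
    finally show ?thesis by simp
  qed
  have key: "emeasure lborel (f ` B) = emeasure lborel B" if B: "B \<in> sets borel" "bounded B" for B
  proof -
    have fB: "f ` B = f -` B" using inv by (auto simp: image_iff) (metis)
    have fBb: "f ` B \<in> sets borel" unfolding fB using B by (simp add: measurable_sets_borel[OF lin_meas[OF linf]])
    have fm: "emeasure lborel X = ennreal (measure lebesgue X)" if "X \<in> sets borel" "bounded X" for X :: "(real^'n wo) set"
      using that emeasure_bounded_finite[of X] by (simp add: emeasure_eq_ennreal_measure)
    define T where "T = \<Phi> ` B"
    have TB: "T = \<Psi> -` B" unfolding T_def using PP QQ by (auto simp: image_iff) (metis)
    have Tb: "T \<in> sets borel" unfolding TB using B by (simp add: measurable_sets_borel[OF \<open>\<Psi> \<in> borel_measurable borel\<close>])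
    have Tbd: "bounded T" unfolding T_def using B linP by (simp add: bounded_linear_image linear_conv_bounded_linear)
    have Tl: "T \<in> lmeasurable" using Tb Tbd by (intro bounded_set_imp_lmeasurable) auto
    have f'i: "f' (f' y) = y" for y by (simp add: f'_def QQ inv PP)
    have ff: "\<Phi> ` f ` B = f' ` T" unfolding T_def f'_def by (auto simp: image_iff QQ)
    have f'T: "f' ` T = f' -` T" using f'i by (auto simp: image_iff) (metis)
    have linf': "linear f'" using orth' by (simp add: orthogonal_transformation_linear)
    have f'Tb: "f' ` T \<in> sets borel" unfolding f'T using Tb by (simp add: measurable_sets_borel[OF lin_meas[OF linf']])
    have f'Tbd: "bounded (f' ` T)" using Tbd linf' by (simp add: bounded_linear_image linear_conv_bounded_linear)
    have "emeasure lborel (f ` B) = emeasure lborel (f' ` T)" using trans[OF fBb] ff by simp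
    also have "\<dots> = ennreal (measure lebesgue (f' ` T))" using fm[OF f'Tb f'Tbd] .
    also have "measure lebesgue (f' ` T) = measure lebesgue T" by (rule measure_orthogonal_image[OF orth' Tl])
    also have "ennreal (measure lebesgue T) = emeasure lborel T" using fm[OF Tb Tbd] by simp
    also have "\<dots> = emeasure lborel B" using trans[OF B(1)] by (simp add: T_def)
    finally show ?thesis .
  qed
  show ?thesis
  proof (rule lborel_eqI[symmetric])
    fix l u :: "real^'n" assume "\<And>b. b \<in> Basis \<Longrightarrow> l \<bullet> b \<le> u \<bullet> b"
    have "f -` box l u = f ` box l u" using inv by (auto simp: image_iff) (metis)
    then have "emeasure (distr lborel borel f) (box l u) = emeasure lborel (box l u)"
      by (simp add: emeasure_distr key)
    then show "emeasure (distr lborel borel f) (box l u) = (\<Prod>b\<in>Basis. (u - l) \<bullet> b)"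
      using \<open>\<And>b. b \<in> Basis \<Longrightarrow> l \<bullet> b \<le> u \<bullet> b\<close> by (simp add: emeasure_lborel_box_eq)
  qed simp
qed



lemma Basis_vec_img: "(Basis :: (real^'n) set) = (\<lambda>i. axis i 1) ` UNIV"
  by (auto simp: Basis_vec_def)

lemma inj_axis1: "inj (\<lambda>i::'n::finite. axis i (1::real))"
  by (auto intro!: injI simp: axis_eq_axis)

lemma prod_Basis_vec_gen: "(\<Prod>b\<in>(Basis :: (real^'n::finite) set). G b) = (\<Prod>i\<in>UNIV. G (axis i 1))"
  unfolding Basis_vec_img by (subst prod.reindex[OF inj_axis1]) simp

lemma nn_prod_vec:
  fixes h :: "'n::finite \<Rightarrow> real \<Rightarrow> real"
  assumes [measurable]: "\<And>i. h i \<in> borel_measurable borel" and nn: "\<And>i t. 0 \<le> h i t"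
  shows "(\<integral>\<^sup>+x. ennreal (\<Prod>i\<in>UNIV. h i (x$i)) \<partial>(lborel::(real^'n) measure)) = (\<Prod>i\<in>UNIV. \<integral>\<^sup>+t. ennreal (h i t) \<partial>lborel)"
proof -
  define idx where "idx b = (SOME i::'n. b = axis i (1::real))" for b :: "real^'n"
  have idx: "idx (axis i 1) = i" for i unfolding idx_def
    by (rule some_equality) (auto simp: axis_eq_axis)
  define f where "f b t = ennreal (h (idx b) t)" for b t
  have "(\<integral>\<^sup>+x. (\<Prod>b\<in>Basis. f b (x \<bullet> b)) \<partial>(lborel::(real^'n) measure)) = (\<Prod>b\<in>Basis. (\<integral>\<^sup>+x. f b x \<partial>lborel))"
    by (rule nn_integral_lborel_prod) (auto simp: f_def)
  moreover have "(\<Prod>b\<in>Basis. f b (x \<bullet> b)) = ennreal (\<Prod>i\<in>UNIV. h i (x$i))" for x :: "real^'n"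
    by (simp add: prod_Basis_vec_gen f_def idx inner_axis prod_ennreal nn)
  moreover have "(\<Prod>b\<in>(Basis :: (real^'n) set). (\<integral>\<^sup>+x. f b x \<partial>lborel)) = (\<Prod>i\<in>UNIV. \<integral>\<^sup>+t. ennreal (h i t) \<partial>lborel)"
    by (simp add: prod_Basis_vec_gen f_def idx)
  ultimately show ?thesis by simp
qed

definition phiv :: "real^'n::finite \<Rightarrow> real" where
  "phiv x = (\<Prod>i\<in>UNIV. std_normal_density (x $ i))"

lemma phiv_nonneg: "0 \<le> phiv x" by (simp add: phiv_def prod_nonneg)

lemma phiv_norm: "phiv x = (1 / sqrt (2 * pi)) ^ CARD('n) * exp (- (norm x)\<^sup>2 / 2)"
  for x :: "real^'n::finite"
proof -
  have "phiv x = (\<Prod>i\<in>UNIV. (1 / sqrt (2 * pi)) * exp (- (x $ i)\<^sup>2 / 2))"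
    by (simp add: phiv_def std_normal_density_def)
  also have "\<dots> = (1 / sqrt (2 * pi)) ^ CARD('n) * exp (\<Sum>i\<in>UNIV. - (x $ i)\<^sup>2 / 2)"
    by (simp add: prod.distrib exp_sum del: times_divide_eq_left divide_inverse)
  also have "(\<Sum>i\<in>UNIV. - (x $ i)\<^sup>2 / 2) = - (norm x)\<^sup>2 / 2"
    by (simp add: norm_vec_def L2_set_def sum_nonneg sum_divide_distrib[symmetric] sum_negf)
  finally show ?thesis .
qed

lemma meas_phiv[measurable]: "phiv \<in> borel_measurable borel"
  unfolding phiv_def by measurable

lemma std_gauss_vec_def': "std_gauss_vec = density lborel (\<lambda>x. ennreal (phiv x))"
  by (simp add: std_gauss_vec_def phiv_def)

lemma sets_sgv[simp, measurable_cong]: "sets std_gauss_vec = sets borel"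
  by (simp add: std_gauss_vec_def)

lemma space_sgv[simp]: "space std_gauss_vec = UNIV"
  by (simp add: std_gauss_vec_def)

lemma nn_std_normal: "(\<integral>\<^sup>+t. ennreal (std_normal_density t) \<partial>lborel) = 1"
  using std_normal_moment_even[of 0]
  by (subst nn_integral_eq_integral) (auto simp: has_bochner_integral_iff)

lemma nn_std_normal_sq: "(\<integral>\<^sup>+t. ennreal (std_normal_density t * t\<^sup>2) \<partial>lborel) = 1"
  using std_normal_moment_even[of 1]
  by (subst nn_integral_eq_integral) (auto simp: has_bochner_integral_iff)

lemma nn_std_normal_abs: "(\<integral>\<^sup>+t. ennreal (std_normal_density t * \<bar>t\<bar>) \<partial>lborel) = sqrt (2 / pi)"
  using std_normal_moment_abs_odd[of 0]
  by (subst nn_integral_eq_integral) (auto simp: has_bochner_integral_iff)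

lemma nn_sgv_prod:
  fixes h :: "'n::finite \<Rightarrow> real \<Rightarrow> real"
  assumes [measurable]: "\<And>i. h i \<in> borel_measurable borel" and nn: "\<And>i t. 0 \<le> h i t"
  shows "(\<integral>\<^sup>+x. ennreal (\<Prod>i\<in>UNIV. h i (x$i)) \<partial>(std_gauss_vec::(real^'n) measure))
     = (\<Prod>i\<in>UNIV. \<integral>\<^sup>+t. ennreal (std_normal_density t * h i t) \<partial>lborel)"
proof -
  have "(\<integral>\<^sup>+x. ennreal (\<Prod>i\<in>UNIV. h i (x$i)) \<partial>(std_gauss_vec::(real^'n) measure))
      = (\<integral>\<^sup>+x. ennreal (phiv x) * ennreal (\<Prod>i\<in>UNIV. h i (x$i)) \<partial>lborel)"
    unfolding std_gauss_vec_def' by (subst nn_integral_density) auto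
  also have "\<dots> = (\<integral>\<^sup>+x. ennreal (\<Prod>i\<in>UNIV. std_normal_density (x$i) * h i (x$i)) \<partial>lborel)"
    by (simp add: phiv_def prod.distrib ennreal_mult' prod_nonneg nn)
  also have "\<dots> = (\<Prod>i\<in>UNIV. \<integral>\<^sup>+t. ennreal (std_normal_density t * h i t) \<partial>lborel)"
    by (rule nn_prod_vec) (auto simp: nn)
  finally show ?thesis .
qed

lemma prob_sgv: "prob_space (std_gauss_vec :: (real^'n::finite) measure)"
proof
  have "emeasure (std_gauss_vec :: (real^'n) measure) (space std_gauss_vec) = (\<integral>\<^sup>+x. ennreal (\<Prod>i\<in>UNIV. (\<lambda>i t. 1) i (x$i)) \<partial>(std_gauss_vec::(real^'n) measure))"
    by simp
  also have "\<dots> = 1" by (subst nn_sgv_prod) (auto simp: nn_std_normal)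
  finally show "emeasure (std_gauss_vec :: (real^'n) measure) (space std_gauss_vec) = 1" .
qed


lemma sgv_orth_inv:
  fixes f :: "real^'n::finite \<Rightarrow> real^'n"
  assumes orth: "orthogonal_transformation f" and inv: "\<And>x. f (f x) = x"
  shows "distr std_gauss_vec borel f = std_gauss_vec"
proof (rule measure_eqI)
  have linf: "linear f" using orth by (simp add: orthogonal_transformation_linear)
  have [measurable]: "f \<in> borel_measurable borel" using lin_meas[OF linf] .
  have ph: "phiv (f x) = phiv x" for x by (simp add: phiv_norm orthogonal_transformation_norm[OF orth])
  show "sets (distr std_gauss_vec borel f) = sets std_gauss_vec" by simp
  fix A assume "A \<in> sets (distr std_gauss_vec borel f)"
  then have A[measurable]: "A \<in> sets borel" by simp
  have "emeasure (distr std_gauss_vec borel f) A = emeasure std_gauss_vec (f -` A)"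
    by (simp add: emeasure_distr)
  also have "\<dots> = (\<integral>\<^sup>+x. ennreal (phiv x) * indicator (f -` A) x \<partial>lborel)"
    unfolding std_gauss_vec_def' by (subst emeasure_density) (auto simp: measurable_sets_borel[OF \<open>f \<in> borel_measurable borel\<close>])
  also have "\<dots> = (\<integral>\<^sup>+x. ennreal (phiv (f x)) * indicator A (f x) \<partial>lborel)"
    by (simp add: ph indicator_def)
  also have "\<dots> = (\<integral>\<^sup>+y. ennreal (phiv y) * indicator A y \<partial>distr lborel borel f)"
    by (subst nn_integral_distr) auto
  also have "\<dots> = (\<integral>\<^sup>+y. ennreal (phiv y) * indicator A y \<partial>lborel)"
    by (simp add: lborel_orth_inv[OF orth inv])
  also have "\<dots> = emeasure std_gauss_vec A"
    unfolding std_gauss_vec_def' by (subst emeasure_density) auto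
  finally show "emeasure (distr std_gauss_vec borel f) A = emeasure std_gauss_vec A" .
qed

lemma sgv_inv_integral:
  fixes f :: "real^'n::finite \<Rightarrow> real^'n" and F :: "real^'n \<Rightarrow> 'b::{banach,second_countable_topology}"
  assumes orth: "orthogonal_transformation f" and inv: "\<And>x. f (f x) = x"
    and [measurable]: "F \<in> borel_measurable borel"
  shows "integral\<^sup>L std_gauss_vec (\<lambda>x. F (f x)) = integral\<^sup>L std_gauss_vec F"
    and "integrable std_gauss_vec (\<lambda>x. F (f x)) \<longleftrightarrow> integrable std_gauss_vec F"
proof -
  have linf: "linear f" using orth by (simp add: orthogonal_transformation_linear)
  have [measurable]: "f \<in> borel_measurable borel" using lin_meas[OF linf] .
  have [measurable]: "f \<in> std_gauss_vec \<rightarrow>\<^sub>M borel" by simp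
  show "integral\<^sup>L std_gauss_vec (\<lambda>x. F (f x)) = integral\<^sup>L std_gauss_vec F"
    using integral_distr[of f std_gauss_vec borel F] sgv_orth_inv[OF orth inv] by simp
  show "integrable std_gauss_vec (\<lambda>x. F (f x)) \<longleftrightarrow> integrable std_gauss_vec F"
    using integrable_distr_eq[of f std_gauss_vec borel F] sgv_orth_inv[OF orth inv] by simp
qed

definition hh :: "real^'n::finite \<Rightarrow> real^'n \<Rightarrow> real^'n" where
  "hh a x = x - (2 * (a \<bullet> x) / (a \<bullet> a)) *\<^sub>R a"

lemma hh_linear: "linear (hh a)"
  by (auto intro!: linearI simp: hh_def inner_add_right inner_scaleR_right add_divide_distrib algebra_simps)

lemma hh_inner: "hh a x \<bullet> y = x \<bullet> hh a y"
  by (simp add: hh_def inner_diff_left inner_diff_right algebra_simps inner_commute)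

lemma hh_inv: "hh a (hh a x) = x"
proof (cases "a = 0")
  case True then show ?thesis by (simp add: hh_def)
next
  case False
  then have "a \<bullet> a \<noteq> 0" by simp
  then show ?thesis
    by (simp add: hh_def inner_diff_right algebra_simps)
qed

lemma hh_ip: "hh a x \<bullet> hh a y = x \<bullet> y"
  by (simp add: hh_inner hh_inv)

lemma hh_orth: "orthogonal_transformation (hh a)"
  by (simp add: orthogonal_transformation_def hh_linear hh_ip)

lemma hh_fix: "a \<bullet> v = 0 \<Longrightarrow> hh a v = v"
  by (simp add: hh_def)

lemma hh_swap:
  assumes "norm w = norm v"
  shows "hh (w - v) v = w"
proof (cases "(w - v) \<bullet> v = 0")
  case True
  have "(w - v) \<bullet> (w - v) = w \<bullet> w - v \<bullet> v - 2 * ((w - v) \<bullet> v)"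
    by (simp add: inner_diff_left inner_diff_right inner_commute)
  also have "w \<bullet> w = v \<bullet> v" using assms by (simp add: dot_square_norm)
  finally have "w - v = 0" using True by simp
  then show ?thesis by (simp add: hh_def)
next
  case False
  have aa: "(w - v) \<bullet> (w - v) = - 2 * ((w - v) \<bullet> v)"
  proof -
    have "(w - v) \<bullet> (w - v) = w \<bullet> w - v \<bullet> v - 2 * ((w - v) \<bullet> v)"
      by (simp add: inner_diff_left inner_diff_right inner_commute)
    also have "w \<bullet> w = v \<bullet> v" using assms by (simp add: dot_square_norm)
    finally show ?thesis by simp
  qed
  show ?thesis using False by (simp add: hh_def aa)
qed

lemma hh_meas[measurable]: "hh a \<in> borel_measurable borel"
  by (rule lin_meas[OF hh_linear])


lemma sgv_coord_sq: "has_bochner_integral (std_gauss_vec :: (real^'n::finite) measure) (\<lambda>x. (x$i)\<^sup>2) 1"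
proof (rule has_bochner_integral_nn_integral)
  have "(\<integral>\<^sup>+x. ennreal ((x$i)\<^sup>2) \<partial>(std_gauss_vec :: (real^'n) measure))
     = (\<integral>\<^sup>+x. ennreal (\<Prod>l\<in>UNIV. (\<lambda>l t. if l = i then t\<^sup>2 else 1) l (x$l)) \<partial>(std_gauss_vec :: (real^'n) measure))"
    by (simp add: prod.delta)
  also have "\<dots> = (\<Prod>l\<in>UNIV. \<integral>\<^sup>+t. ennreal (std_normal_density t * (if l = i then t\<^sup>2 else 1)) \<partial>lborel)"
    by (rule nn_sgv_prod) auto
  also have "\<dots> = 1"
  proof (intro prod.neutral ballI)
    fix l show "(\<integral>\<^sup>+t. ennreal (std_normal_density t * (if l = i then t\<^sup>2 else 1)) \<partial>lborel) = 1"
      by (cases "l = i") (simp_all add: nn_std_normal nn_std_normal_sq)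
  qed
  finally show "(\<integral>\<^sup>+x. ennreal ((x$i)\<^sup>2) \<partial>(std_gauss_vec :: (real^'n) measure)) = ennreal 1" by simp
qed auto

lemma sgv_coord_abs2:
  assumes "i \<noteq> j"
  shows "has_bochner_integral (std_gauss_vec :: (real^'n::finite) measure) (\<lambda>x. \<bar>x$i\<bar> * \<bar>x$j\<bar>) (2 / pi)"
proof (rule has_bochner_integral_nn_integral)
  let ?h = "\<lambda>l t. if l = i \<or> l = j then \<bar>t\<bar> else (1::real)"
  have pr: "(\<Prod>l\<in>UNIV. ?h l (x$l)) = \<bar>x$i\<bar> * \<bar>x$j\<bar>" for x :: "real^'n"
  proof -
    have "(\<Prod>l\<in>UNIV. ?h l (x$l)) = ?h i (x$i) * (\<Prod>l\<in>UNIV-{i}. ?h l (x$l))"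
      by (subst prod.remove[of _ i]) auto
    also have "(\<Prod>l\<in>UNIV-{i}. ?h l (x$l)) = ?h j (x$j) * (\<Prod>l\<in>UNIV-{i}-{j}. ?h l (x$l))"
      using assms by (subst prod.remove[of _ j]) auto
    also have "(\<Prod>l\<in>UNIV-{i}-{j}. ?h l (x$l)) = 1" by (intro prod.neutral) auto
    finally show ?thesis by simp
  qed
  have pr2: "(\<Prod>l\<in>UNIV. \<integral>\<^sup>+t. ennreal (std_normal_density t * ?h l t) \<partial>lborel) = ennreal (sqrt (2/pi)) * ennreal (sqrt (2/pi))"
  proof -
    let ?g = "\<lambda>l. \<integral>\<^sup>+t. ennreal (std_normal_density t * ?h l t) \<partial>lborel"
    have "(\<Prod>l\<in>UNIV. ?g l) = ?g i * (\<Prod>l\<in>UNIV-{i}. ?g l)"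
      by (subst prod.remove[of _ i]) auto
    also have "(\<Prod>l\<in>UNIV-{i}. ?g l) = ?g j * (\<Prod>l\<in>UNIV-{i}-{j}. ?g l)"
      using assms by (subst prod.remove[of _ j]) auto
    also have "(\<Prod>l\<in>UNIV-{i}-{j}. ?g l) = 1" by (intro prod.neutral) (auto simp: nn_std_normal)
    finally show ?thesis using assms by (simp add: nn_std_normal_abs)
  qed
  have "(\<integral>\<^sup>+x. ennreal (\<bar>x$i\<bar> * \<bar>x$j\<bar>) \<partial>(std_gauss_vec :: (real^'n) measure))
     = (\<integral>\<^sup>+x. ennreal (\<Prod>l\<in>UNIV. ?h l (x$l)) \<partial>(std_gauss_vec :: (real^'n) measure))"
    by (simp add: pr)
  also have "\<dots> = (\<Prod>l\<in>UNIV. \<integral>\<^sup>+t. ennreal (std_normal_density t * ?h l t) \<partial>lborel)"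
    by (rule nn_sgv_prod) auto
  also have "\<dots> = ennreal (2 / pi)"
    unfolding pr2 by (simp add: ennreal_mult'[symmetric] real_sqrt_mult[symmetric])
  finally show "(\<integral>\<^sup>+x. ennreal (\<bar>x$i\<bar> * \<bar>x$j\<bar>) \<partial>(std_gauss_vec :: (real^'n) measure)) = ennreal (2 / pi)" .
qed auto


lemma sgv_hh_hbi:
  fixes F :: "real^'n::finite \<Rightarrow> real"
  assumes [measurable]: "F \<in> borel_measurable borel"
  shows "has_bochner_integral std_gauss_vec (\<lambda>x. F (hh a x)) c \<longleftrightarrow> has_bochner_integral std_gauss_vec F c"
  using sgv_inv_integral[OF hh_orth hh_inv assms, of a]
  by (simp add: has_bochner_integral_iff)

lemma axis_norm1: "norm (axis i (1::real)) = 1"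
  by (simp add: norm_eq_sqrt_inner inner_axis_axis)

lemma sgv_unit_sq:
  fixes u :: "real^'n::finite"
  assumes "norm u = 1"
  shows "has_bochner_integral std_gauss_vec (\<lambda>x. (x \<bullet> u)\<^sup>2) 1"
proof -
  obtain i :: 'n where True by simp
  define a where "a = axis i 1 - u"
  have Hu: "hh a u = axis i 1" unfolding a_def by (rule hh_swap) (simp add: assms axis_norm1)
  have eq: "x \<bullet> u = (hh a x) $ i" for x
  proof -
    have "x \<bullet> u = hh a x \<bullet> hh a u" by (simp add: hh_ip)
    also have "\<dots> = (hh a x) $ i" by (simp add: Hu inner_axis)
    finally show ?thesis .
  qed
  have "has_bochner_integral std_gauss_vec (\<lambda>x. ((hh a x) $ i)\<^sup>2) 1"
    by (subst sgv_hh_hbi[where F = "\<lambda>y. (y $ i)\<^sup>2"]) (auto intro: sgv_coord_sq)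
  then show ?thesis by (simp add: eq)
qed

lemma sgv_orth_abs2:
  fixes u v :: "real^'n::finite"
  assumes "CARD('n) \<ge> 2" and "norm u = 1" "norm v = 1" "u \<bullet> v = 0"
  shows "has_bochner_integral std_gauss_vec (\<lambda>x. \<bar>x \<bullet> u\<bar> * \<bar>x \<bullet> v\<bar>) (2 / pi)"
proof -
  obtain i j :: 'n where ij: "i \<noteq> j"
  proof -
    have "\<not> (\<forall>i j::'n. i = j)"
    proof
      assume "\<forall>i j::'n. i = j"
      then have "CARD('n) \<le> Suc 0" by (subst card_le_Suc0_iff_eq) auto
      with assms show False by simp
    qed
    then show ?thesis using that by blast
  qed
  define a1 where "a1 = axis i 1 - u"
  have H1u: "hh a1 u = axis i 1" unfolding a1_def by (rule hh_swap) (simp add: assms axis_norm1)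
  define v' where "v' = hh a1 v"
  have v'n: "norm v' = 1" using assms by (simp add: v'_def orthogonal_transformation_norm[OF hh_orth])
  have v'i: "v' \<bullet> axis i 1 = 0" using assms by (simp add: v'_def H1u[symmetric] hh_ip inner_commute)
  define a2 where "a2 = axis j 1 - v'"
  have H2v: "hh a2 v' = axis j 1" unfolding a2_def by (rule hh_swap) (simp add: v'n axis_norm1)
  have H2i: "hh a2 (axis i 1) = axis i 1"
    by (rule hh_fix) (simp add: a2_def inner_diff_left v'i inner_axis_axis ij[symmetric])
  have e1: "x \<bullet> u = (hh a2 (hh a1 x)) $ i" for x
  proof -
    have "x \<bullet> u = hh a1 x \<bullet> hh a1 u" by (simp add: hh_ip)
    also have "\<dots> = hh a2 (hh a1 x) \<bullet> hh a2 (axis i 1)" by (simp add: hh_ip H1u)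
    also have "\<dots> = (hh a2 (hh a1 x)) $ i" by (simp add: H2i inner_axis)
    finally show ?thesis .
  qed
  have e2: "x \<bullet> v = (hh a2 (hh a1 x)) $ j" for x
  proof -
    have "x \<bullet> v = hh a1 x \<bullet> v'" by (simp add: hh_ip v'_def)
    also have "\<dots> = hh a2 (hh a1 x) \<bullet> hh a2 v'" by (simp add: hh_ip)
    also have "\<dots> = (hh a2 (hh a1 x)) $ j" by (simp add: H2v inner_axis)
    finally show ?thesis .
  qed
  let ?F = "\<lambda>y::real^'n. \<bar>y $ i\<bar> * \<bar>y $ j\<bar>"
  have h1: "has_bochner_integral std_gauss_vec ?F (2/pi)" by (rule sgv_coord_abs2[OF ij])
  have h2: "has_bochner_integral std_gauss_vec (\<lambda>x. ?F (hh a2 x)) (2/pi)"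
    using sgv_hh_hbi[of ?F a2 "2/pi"] h1 by simp
  have "has_bochner_integral std_gauss_vec (\<lambda>x. ?F (hh a2 (hh a1 x))) (2/pi)"
    using sgv_hh_hbi[of "\<lambda>x. ?F (hh a2 x)" a1 "2/pi"] h2 by simp
  then show ?thesis by (simp add: e1 e2)
qed

lemma sgv_norm_sq: "has_bochner_integral (std_gauss_vec :: (real^'n::finite) measure) (\<lambda>x. (norm x)\<^sup>2) (real CARD('n))"
proof -
  have "has_bochner_integral (std_gauss_vec :: (real^'n::finite) measure) (\<lambda>x. \<Sum>i\<in>UNIV. (x$i)\<^sup>2) (\<Sum>i\<in>(UNIV::'n set). 1)"
    by (intro has_bochner_integral_sum sgv_coord_sq)
  moreover have "(norm x)\<^sup>2 = (\<Sum>i\<in>UNIV. (x$i)\<^sup>2)" for x :: "real^'n"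
    by (simp add: norm_vec_def L2_set_def sum_nonneg)
  ultimately show ?thesis by simp
qed



lemma gsa_meas:
  fixes US :: "'b \<Rightarrow> (real^'n::finite) list"
  assumes "\<And>j. (\<lambda>r. US r ! j) \<in> borel_measurable N" "\<And>r. length (US r) = c"
    "\<And>f. f \<in> set fs \<Longrightarrow> f \<in> borel_measurable N"
  shows "(\<lambda>r. gram_schmidt_aux (US r) (map (\<lambda>f. f r) fs) ! j) \<in> borel_measurable N"
  using assms
proof (induction fs arbitrary: US c)
  case Nil then show ?case by simp
next
  case (Cons f fs)
  define w where "w r = f r - (\<Sum>l<c. (f r \<bullet> US r ! l) *\<^sub>R US r ! l)" for r
  define e where "e r = (1 / norm (w r)) *\<^sub>R w r" for r
  have [measurable]: "f \<in> borel_measurable N" using Cons.prems by simp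
  have [measurable]: "(\<lambda>r. US r ! j) \<in> borel_measurable N" for j using Cons.prems by simp
  have wm[measurable]: "w \<in> borel_measurable N" unfolding w_def by measurable
  have em[measurable]: "e \<in> borel_measurable N" unfolding e_def by measurable
  have eq: "gram_schmidt_aux (US r) (map (\<lambda>f. f r) (f # fs)) = gram_schmidt_aux (US r @ [e r]) (map (\<lambda>f. f r) fs)" for r
    using Cons.prems(2) by (simp add: Let_def e_def w_def sl_map)
  have m2: "(\<lambda>r. (US r @ [e r]) ! j) \<in> borel_measurable N" for j
  proof -
    have "(US r @ [e r]) ! j = (if j < c then US r ! j else if j = c then e r else [] ! (j - c - 1))" for r
      using Cons.prems(2) by (auto simp: nth_append)
    then show ?thesis by simp
  qed
  show ?case unfolding eq
    by (rule Cons.IH[of _ "Suc c"]) (use m2 Cons.prems in auto)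
qed

locale gsset =
  fixes s k :: nat and p :: "nat \<Rightarrow> real^'n::finite"
  assumes orthn: "\<forall>i<s. \<forall>j<s. p i \<bullet> p j = (if i = j then 1 else 0)"
    and dimk: "s + k \<le> CARD('n)" and k1: "1 \<le> k" and card2: "CARD('n) \<ge> 2"
begin

definition GSL :: "(nat \<Rightarrow> real^'n) \<Rightarrow> (real^'n) list" where
  "GSL r = gram_schmidt (map p [0..<s] @ map r [0..<k])"

definition uu :: "(nat \<Rightarrow> real^'n) \<Rightarrow> nat \<Rightarrow> real^'n" where
  "uu r i = GSL r ! (s + i)"

definition PM :: "(nat \<Rightarrow> real^'n) measure" where
  "PM = PiM {..<k} (\<lambda>_. std_gauss_vec)"

lemma GSL_eq: "GSL r = gram_schmidt_aux (map p [0..<s]) (map r [0..<k])"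
  unfolding GSL_def gram_schmidt_def by (simp add: gsa_append gsa_orthonormal[OF orthn])

lemma GSL_len: "length (GSL r) = s + k"
  by (simp add: GSL_eq gsa_length)

lemma GSL_p: "j < s \<Longrightarrow> GSL r ! j = p j"
  by (simp add: GSL_eq gsa_prefix)

lemma GSL_oz: "oz (GSL r)"
  unfolding GSL_def gram_schmidt_def by (rule oz_gsa[OF oz_Nil])

lemma uu_p: "i < k \<Longrightarrow> j < s \<Longrightarrow> uu r i \<bullet> p j = 0"
proof -
  assume a: "i < k" "j < s"
  have "\<forall>i<s+k. \<forall>j<s+k. i \<noteq> j \<longrightarrow> GSL r ! i \<bullet> GSL r ! j = 0"
    using GSL_oz[of r] GSL_len[of r] unfolding oz_def by auto
  then have "GSL r ! (s+i) \<bullet> GSL r ! j = 0" using a by auto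
  then show ?thesis using GSL_p[of j r] a by (simp add: uu_def)
qed

lemma uu_uu: "i < k \<Longrightarrow> j < k \<Longrightarrow> i \<noteq> j \<Longrightarrow> uu r i \<bullet> uu r j = 0"
  using GSL_oz[of r] GSL_len[of r] unfolding oz_def uu_def by auto

lemma uu_01: "i < k \<Longrightarrow> uu r i = 0 \<or> norm (uu r i) = 1"
  using GSL_oz[of r] GSL_len[of r] unfolding oz_def uu_def by auto

lemma uu_norm_le: "i < k \<Longrightarrow> norm (uu r i) \<le> 1"
  using uu_01[of i r] by auto

lemma uu_cong: "(\<And>i. i < k \<Longrightarrow> r i = r' i) \<Longrightarrow> uu r = uu r'"
proof -
  assume "\<And>i. i < k \<Longrightarrow> r i = r' i"
  then have e: "map r [0..<k] = map r' [0..<k]" by simp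
  show ?thesis unfolding uu_def GSL_def e ..
qed

lemma uu_equiv:
  assumes "\<And>j. j < s \<Longrightarrow> a \<bullet> p j = 0" and "i < k"
  shows "uu (\<lambda>i. hh a (r i)) i = hh a (uu r i)"
proof -
  have pj: "map p [0..<s] @ map (\<lambda>i. hh a (r i)) [0..<k] = map (hh a) (map p [0..<s] @ map r [0..<k])"
    using assms by (auto simp: hh_fix)
  have "GSL (\<lambda>i. hh a (r i)) = map (hh a) (GSL r)"
    unfolding GSL_def gram_schmidt_def pj
    using gsa_equiv[OF hh_linear hh_ip, of a "[]" "map p [0..<s] @ map r [0..<k]"] by simp
  then show ?thesis
    unfolding uu_def using GSL_len[of r] assms(2) by simp
qed

lemma uu_meas[measurable]: "(\<lambda>r. uu r i) \<in> borel_measurable PM"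
proof -
  have "(\<lambda>r. gram_schmidt_aux ((\<lambda>r. []) r) (map (\<lambda>f. f r) (map (\<lambda>j r. p j) [0..<s] @ map (\<lambda>j r. r j) [0..<k])) ! (s + i)) \<in> borel_measurable PM"
  proof (rule gsa_meas[where c = 0])
    fix f assume "f \<in> set (map (\<lambda>j r. p j) [0..<s] @ map (\<lambda>j (r :: nat \<Rightarrow> real^'n). r j) [0..<k])"
    have c: "(\<lambda>r. r j) \<in> borel_measurable PM" if "j < k" for j
    proof -
      have "(\<lambda>r. r j) \<in> measurable PM std_gauss_vec" using that by (simp add: PM_def measurable_component_singleton)
      then show ?thesis using measurable_cong_sets[OF refl sets_sgv] by blast
    qed
    then show "f \<in> borel_measurable PM" using \<open>f \<in> _\<close> by auto
  qed auto
  then show ?thesis by (simp add: uu_def GSL_def gram_schmidt_def comp_def)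
qed


lemma prob_PM: "prob_space PM"
  unfolding PM_def by (intro prob_space_PiM prob_sgv)

lemma PM_inv_distr: "distr PM PM (compose {..<k} (hh a)) = PM"
proof -
  have "distr PM PM (compose {..<k} (hh a)) = PiM {..<k} (\<lambda>i. distr std_gauss_vec std_gauss_vec (hh a))"
    unfolding PM_def
    by (rule distr_PiM_finite_prob_space') (auto simp: prob_sgv measurable_cong_sets[OF sets_sgv sets_sgv])
  also have "distr std_gauss_vec std_gauss_vec (hh a) = distr std_gauss_vec borel (hh a)"
    by (rule distr_cong) auto
  also have "\<dots> = std_gauss_vec" by (rule sgv_orth_inv[OF hh_orth hh_inv])
  finally show ?thesis by (simp add: PM_def)
qed

lemma PM_inv_meas[measurable]: "compose {..<k} (hh a) \<in> PM \<rightarrow>\<^sub>M PM"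
  unfolding PM_def compose_def
proof (rule measurable_restrict)
  fix i assume "i \<in> {..<k}"
  have "(\<lambda>r. r i) \<in> measurable (PiM {..<k} (\<lambda>_. std_gauss_vec)) std_gauss_vec"
    using \<open>i \<in> {..<k}\<close> by (rule measurable_component_singleton)
  moreover have "hh a \<in> measurable std_gauss_vec std_gauss_vec"
    by (simp add: measurable_cong_sets[OF sets_sgv sets_sgv])
  ultimately show "(\<lambda>r. hh a (r i)) \<in> measurable (PiM {..<k} (\<lambda>_. std_gauss_vec)) std_gauss_vec"
    by (rule measurable_compose[where f = "\<lambda>r. r i"])
qed


lemma PM_inv_integral:
  fixes F :: "(nat \<Rightarrow> real^'n) \<Rightarrow> 'b::{banach,second_countable_topology}"
  assumes [measurable]: "F \<in> borel_measurable PM"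
  shows "integral\<^sup>L PM (\<lambda>r. F (compose {..<k} (hh a) r)) = integral\<^sup>L PM F"
    and "integrable PM (\<lambda>r. F (compose {..<k} (hh a) r)) \<longleftrightarrow> integrable PM F"
  using integral_distr[of "compose {..<k} (hh a)" PM PM F] integrable_distr_eq[of "compose {..<k} (hh a)" PM PM F]
  by (simp_all add: PM_inv_distr)

lemma uu_compose:
  assumes "\<And>j. j < s \<Longrightarrow> a \<bullet> p j = 0" and "i < k"
  shows "uu (compose {..<k} (hh a) r) i = hh a (uu r i)"
proof -
  have "uu (compose {..<k} (hh a) r) = uu (\<lambda>i. hh a (r i))"
    by (rule uu_cong) (simp add: compose_def)
  then show ?thesis using uu_equiv[OF assms] by simp
qed

lemma uu_zero_span:
  assumes "i < k" "uu r i = 0"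
  shows "r i \<in> span (set (gram_schmidt (map p [0..<s] @ map r [0..<i])))"
proof -
  have ks: "[0..<k] = [0..<i] @ i # [Suc i..<k]"
  proof -
    have "[0..<k] = [0..<i] @ [i..<k]" using upt_add_eq_append[of 0 i "k - i"] assms(1) by simp
    also have "[i..<k] = i # [Suc i..<k]" using assms(1) by (simp add: upt_conv_Cons)
    finally show ?thesis .
  qed
  have "GSL r = gram_schmidt_aux (gram_schmidt (map p [0..<s] @ map r [0..<i])) (r i # map r [Suc i..<k])"
    unfolding GSL_def gram_schmidt_def ks
    using gsa_append[of "[]" "map p [0..<s] @ map r [0..<i]" "r i # map r [Suc i..<k]"] by simp
  moreover have "length (gram_schmidt (map p [0..<s] @ map r [0..<i])) = s + i"
    by (simp add: gram_schmidt_def gsa_length)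
  ultimately show ?thesis
    using assms(2) unfolding uu_def by (intro gsa_zero_span) simp
qed

lemma span_null:
  fixes L :: "(real^'n) list"
  assumes "length L < CARD('n)"
  shows "emeasure std_gauss_vec (span (set L)) = 0"
proof -
  have "dim (span (set L)) \<le> card (set L)" by (rule dim_le_card) auto
  also have "\<dots> \<le> length L" by (rule card_length)
  finally have "dim (span (set L)) < DIM(real^'n)" using assms by simp
  then have "negligible (span (set L))" by (rule negligible_lowdim)
  then have nl: "span (set L) \<in> null_sets lebesgue" by (simp add: negligible_iff_null_sets)
  have sb: "span (set L) \<in> sets borel" by (simp add: closed_subspace subspace_span borel_closed)
  then have "span (set L) \<in> null_sets lborel" using nl null_sets_completion_iff[of "span (set L)" lborel] by simp
  then have "AE x in lborel. x \<in> span (set L) \<longrightarrow> ennreal (phiv x) = 0"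
    by (metis (mono_tags, lifting) AE_not_in eventually_mono)
  then have "span (set L) \<in> null_sets std_gauss_vec"
    unfolding std_gauss_vec_def' using sb by (subst null_sets_density_iff) auto
  then show ?thesis by (rule null_setsD1)
qed

lemma AE_nd: "AE r in PM. \<forall>i\<in>{..<k}. uu r i \<noteq> 0"
proof (subst AE_ball_countable, simp, intro ballI)
  fix i assume i: "i \<in> {..<k}"
  define I' where "I' = {..<k} - {i}"
  have ins: "insert i I' = {..<k}" using i by (auto simp: I'_def)
  let ?M = "std_gauss_vec :: (real^'n) measure"
  let ?Q = "PiM I' (\<lambda>_. ?M)"
  interpret Q: prob_space ?Q by (intro prob_space_PiM prob_sgv)
  interpret M: prob_space ?M by (rule prob_sgv)
  interpret MQ: pair_sigma_finite ?M ?Q ..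
  have PMd: "PM = distr (?M \<Otimes>\<^sub>M ?Q) PM (\<lambda>(x, X). X(i := x))"
    unfolding PM_def ins[symmetric] by (rule distr_pair_PiM_eq_PiM[symmetric]) (auto simp: prob_sgv)
  have fm[measurable]: "(\<lambda>(x, X). X(i := x)) \<in> ?M \<Otimes>\<^sub>M ?Q \<rightarrow>\<^sub>M PM"
  proof -
    have "(\<lambda>z. (snd z) (i := fst z)) \<in> measurable (?M \<Otimes>\<^sub>M ?Q) (PiM {..<k} (\<lambda>_. ?M))"
      by (rule measurable_fun_upd[where J = I']) (use ins in auto)
    then show ?thesis unfolding PM_def by (simp add: case_prod_beta')
  qed
  define N where "N = {r \<in> space PM. uu r i = 0}"
  have Nm[measurable]: "N \<in> sets PM" unfolding N_def by measurable
  let ?A = "(\<lambda>(x, X). X(i := x)) -` N \<inter> space (?M \<Otimes>\<^sub>M ?Q)"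
  have Am: "?A \<in> sets (?M \<Otimes>\<^sub>M ?Q)" by measurable
  have "emeasure PM N = emeasure (?M \<Otimes>\<^sub>M ?Q) ?A"
    by (subst PMd) (simp add: emeasure_distr)
  also have "\<dots> = (\<integral>\<^sup>+X. emeasure ?M ((\<lambda>x. (x, X)) -` ?A) \<partial>?Q)"
    by (rule MQ.emeasure_pair_measure_alt2[OF Am])
  also have "\<dots> = (\<integral>\<^sup>+X. 0 \<partial>?Q)"
  proof (rule nn_integral_cong)
    fix X assume X: "X \<in> space ?Q"
    let ?S = "span (set (gram_schmidt (map p [0..<s] @ map X [0..<i])))"
    have sl: "(\<lambda>x. (x, X)) -` ?A \<subseteq> ?S"
    proof
      fix x assume "x \<in> (\<lambda>x. (x, X)) -` ?A"
      then have u0: "uu (X(i := x)) i = 0" by (simp add: N_def)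
      have "(X(i := x)) i \<in> span (set (gram_schmidt (map p [0..<s] @ map (X(i := x)) [0..<i])))"
        by (rule uu_zero_span[OF _ u0]) (use i in simp)
      moreover have "map (X(i := x)) [0..<i] = map X [0..<i]" by simp
      ultimately show "x \<in> ?S" by simp
    qed
    have "length (gram_schmidt (map p [0..<s] @ map X [0..<i])) < CARD('n)"
      using i dimk by (simp add: gram_schmidt_def gsa_length)
    then have z: "emeasure ?M ?S = 0" by (rule span_null)
    have Sb: "?S \<in> sets ?M" by (simp add: closed_subspace subspace_span borel_closed)
    have "emeasure ?M ((\<lambda>x. (x, X)) -` ?A) \<le> emeasure ?M ?S"
      by (rule emeasure_mono[OF sl Sb])
    then show "emeasure ?M ((\<lambda>x. (x, X)) -` ?A) = 0" using z by simp
  qed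
  finally have "emeasure PM N = 0" by simp
  then have "N \<in> null_sets PM" using Nm by (intro null_setsI)
  then show "AE r in PM. uu r i \<noteq> 0"
    by (rule AE_I') (auto simp: N_def)
qed


definition TT :: "real^'n \<Rightarrow> (nat \<Rightarrow> real^'n) \<Rightarrow> real" where
  "TT w r = (\<Sum>i<k. \<bar>w \<bullet> uu r i\<bar>)"

definition VV :: "real^'n \<Rightarrow> (nat \<Rightarrow> real^'n) \<Rightarrow> real^'n" where
  "VV w r = (1 / sqrt (real k)) *\<^sub>R (\<Sum>i<k. sgn (w \<bullet> uu r i) *\<^sub>R uu r i)"

definition XX :: "real^'n \<Rightarrow> (nat \<Rightarrow> real^'n) \<Rightarrow> real^'n" where
  "XX w r = (w \<bullet> VV w r) *\<^sub>R VV w r"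

definition PPv :: "real^'n \<Rightarrow> real^'n" where
  "PPv w = w - (\<Sum>j<s. (w \<bullet> p j) *\<^sub>R p j)"

lemma TT_meas[measurable]: "TT w \<in> borel_measurable PM"
  unfolding TT_def by measurable

lemma VV_meas[measurable]: "VV w \<in> borel_measurable PM"
  unfolding VV_def by measurable

lemma XX_meas[measurable]: "XX w \<in> borel_measurable PM"
  unfolding XX_def by measurable

lemma PPv_p: "j < s \<Longrightarrow> PPv w \<bullet> p j = 0"
proof -
  assume j: "j < s"
  have "(\<Sum>l<s. (w \<bullet> p l) *\<^sub>R p l) \<bullet> p j = (\<Sum>l<s. (w \<bullet> p l) * (p l \<bullet> p j))"
    by (simp add: inner_sum_left)
  also have "\<dots> = (w \<bullet> p j)"
    using j orthn by (subst sum.remove[of _ j]) (auto intro!: sum.neutral)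
  finally show ?thesis by (simp add: PPv_def inner_diff_left)
qed

lemma uu_PPv: "i < k \<Longrightarrow> w \<bullet> uu r i = PPv w \<bullet> uu r i"
proof -
  assume i: "i < k"
  have "(\<Sum>l<s. (w \<bullet> p l) *\<^sub>R p l) \<bullet> uu r i = 0"
    using i uu_p by (simp add: inner_sum_left inner_commute[of "p _"])
  then show ?thesis by (simp add: PPv_def inner_diff_left)
qed

lemma TT_PPv: "TT w r = TT (PPv w) r"
  unfolding TT_def by (intro sum.cong refl arg_cong[where f = abs] uu_PPv) simp

lemma VV_PPv: "VV w r = VV (PPv w) r"
  unfolding VV_def
  by (intro arg_cong[where f = "\<lambda>x. _ *\<^sub>R x"] sum.cong refl arg_cong[where f = "\<lambda>x. sgn x *\<^sub>R _"] uu_PPv) simp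

lemma VV_inner: "w \<bullet> VV w r = TT w r / sqrt (real k)"
proof -
  have "sgn t * t = \<bar>t\<bar>" for t :: real by (cases "t > 0"; cases "t = 0") auto
  then show ?thesis by (simp add: VV_def TT_def inner_sum_right)
qed

lemma VV_inner_PPv: "w \<bullet> VV w r = PPv w \<bullet> VV w r"
  unfolding VV_def inner_scaleR_right inner_sum_right
  by (intro arg_cong[where f = "\<lambda>x. _ * x"] sum.cong refl) (simp add: uu_PPv[of _ w])

lemma VV_p: "j < s \<Longrightarrow> VV w r \<bullet> p j = 0"
  unfolding VV_def by (simp add: inner_sum_left uu_p)

lemma VV_norm: "norm (VV w r) \<le> sqrt (real k)"
proof -
  have "norm (\<Sum>i<k. sgn (w \<bullet> uu r i) *\<^sub>R uu r i) \<le> (\<Sum>i<k. norm (sgn (w \<bullet> uu r i) *\<^sub>R uu r i))"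
    by (rule norm_sum)
  also have "\<dots> \<le> (\<Sum>i<k. 1)"
  proof (rule sum_mono)
    fix i assume "i \<in> {..<k}"
    then have "norm (uu r i) \<le> 1" by (simp add: uu_norm_le)
    moreover have "\<bar>sgn (w \<bullet> uu r i)\<bar> \<le> 1" by (simp add: abs_sgn_eq)
    ultimately show "norm (sgn (w \<bullet> uu r i) *\<^sub>R uu r i) \<le> 1"
      by (simp add: mult_le_one)
  qed
  finally have "norm (\<Sum>i<k. sgn (w \<bullet> uu r i) *\<^sub>R uu r i) \<le> real k" by simp
  moreover have "real k / sqrt (real k) = sqrt (real k)"
    using k1 by (simp add: real_div_sqrt)
  ultimately show ?thesis
  proof -
    have "norm (VV w r) = norm (\<Sum>i<k. sgn (w \<bullet> uu r i) *\<^sub>R uu r i) / sqrt (real k)"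
      by (simp add: VV_def)
    also have "\<dots> \<le> real k / sqrt (real k)"
      by (rule divide_right_mono) (use \<open>norm _ \<le> real k\<close> in auto)
    finally show ?thesis using \<open>real k / sqrt (real k) = sqrt (real k)\<close> by simp
  qed
qed

lemma TT_bound: "\<bar>TT w r\<bar> \<le> real k * norm w"
proof -
  have "\<bar>TT w r\<bar> = TT w r" by (simp add: TT_def sum_nonneg)
  also have "\<dots> \<le> (\<Sum>i<k. norm w)"
    unfolding TT_def
  proof (rule sum_mono)
    fix i assume "i \<in> {..<k}"
    then have "norm (uu r i) \<le> 1" by (simp add: uu_norm_le)
    then show "\<bar>w \<bullet> uu r i\<bar> \<le> norm w"
    proof -
      have "\<bar>w \<bullet> uu r i\<bar> \<le> norm w * norm (uu r i)" by (rule Cauchy_Schwarz_ineq2)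
      also have "\<dots> \<le> norm w * 1" by (rule mult_left_mono) (use \<open>norm (uu r i) \<le> 1\<close> in auto)
      finally show ?thesis by simp
    qed
  qed
  finally show ?thesis by simp
qed

lemma TT_nonneg: "0 \<le> TT w r" by (simp add: TT_def sum_nonneg)

lemma TT_scale: "TT (c *\<^sub>R w) r = \<bar>c\<bar> * TT w r"
  by (simp add: TT_def abs_mult sum_distrib_left)

lemma TT_hh:
  assumes "\<And>j. j < s \<Longrightarrow> a \<bullet> p j = 0"
  shows "TT (hh a w) (compose {..<k} (hh a) r) = TT w r"
  unfolding TT_def by (intro sum.cong) (auto simp: uu_compose[OF assms] hh_ip)

lemma VV_hh:
  assumes "\<And>j. j < s \<Longrightarrow> a \<bullet> p j = 0"
  shows "VV g (compose {..<k} (hh a) r) = hh a (VV (hh a g) r)"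
proof -
  have lin: "linear (hh a)" by (rule hh_linear)
  have "VV g (compose {..<k} (hh a) r) = (1 / sqrt (real k)) *\<^sub>R (\<Sum>i<k. sgn (hh a g \<bullet> uu r i) *\<^sub>R hh a (uu r i))"
    unfolding VV_def by (intro arg_cong[where f = "\<lambda>x. _ *\<^sub>R x"] sum.cong) (auto simp: uu_compose[OF assms] hh_inner inner_commute)
  also have "\<dots> = hh a (VV (hh a g) r)"
    unfolding VV_def by (simp add: linear_scale[OF lin] linear_sum[OF lin])
  finally show ?thesis .
qed

lemma XX_hh:
  assumes "\<And>j. j < s \<Longrightarrow> a \<bullet> p j = 0"
  shows "XX g (compose {..<k} (hh a) r) = hh a (XX (hh a g) r)"
  unfolding XX_def by (simp add: VV_hh[OF assms] linear_scale[OF hh_linear] hh_inner[symmetric])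


definition hT :: "real^'n \<Rightarrow> real" where
  "hT w = integral\<^sup>L PM (\<lambda>r. (TT w r)\<^sup>2)"

lemma TT_sq_int: "integrable PM (\<lambda>r. (TT w r)\<^sup>2)"
proof -
  interpret prob_space PM by (rule prob_PM)
  show ?thesis
  proof (rule integrable_const_bound[where B = "(real k * norm w)\<^sup>2"])
    show "AE r in PM. norm ((TT w r)\<^sup>2) \<le> (real k * norm w)\<^sup>2"
      using TT_bound[of w] by (auto simp: abs_le_square_iff[symmetric] TT_nonneg)
  qed simp
qed

lemma hT_hh:
  assumes "\<And>j. j < s \<Longrightarrow> a \<bullet> p j = 0"
  shows "hT (hh a w) = hT w"
proof -
  have "hT (hh a w) = integral\<^sup>L PM (\<lambda>r. (TT (hh a w) (compose {..<k} (hh a) r))\<^sup>2)"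
    unfolding hT_def by (rule PM_inv_integral(1)[symmetric]) simp
  also have "\<dots> = hT w" unfolding hT_def by (simp add: TT_hh[OF assms])
  finally show ?thesis .
qed

lemma hT_scale: "hT (c *\<^sub>R w) = c\<^sup>2 * hT w"
  unfolding hT_def TT_scale by (simp add: power_mult_distrib)

lemma hT_W:
  assumes w: "\<And>j. j < s \<Longrightarrow> w \<bullet> p j = 0" and g0: "\<And>j. j < s \<Longrightarrow> g0 \<bullet> p j = 0" and "g0 \<noteq> 0"
  shows "hT w = (norm w)\<^sup>2 / (norm g0)\<^sup>2 * hT g0"
proof (cases "w = 0")
  case True
  then show ?thesis using hT_scale[of 0 w] by simp
next
  case False
  define c where "c = norm w / norm g0"
  have c0: "c > 0" using False assms(3) by (simp add: c_def)
  define w0 where "w0 = (1 / c) *\<^sub>R w"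
  have ww: "w = c *\<^sub>R w0" using c0 by (simp add: w0_def)
  have nw0: "norm w0 = norm g0" using c0 assms(3) False by (simp add: w0_def c_def)
  have a: "(w0 - g0) \<bullet> p j = 0" if "j < s" for j
    using w[OF that] g0[OF that] by (simp add: w0_def inner_diff_left)
  have "hh (w0 - g0) g0 = w0" by (rule hh_swap[OF nw0])
  then have "hT w0 = hT g0" using hT_hh[of "w0 - g0" g0] a by simp
  then show ?thesis using ww hT_scale[of c w0] c0 by (simp add: c_def power_divide)
qed

lemma sum_if_const: "i < k \<Longrightarrow> (\<Sum>j<k. if i = j then 1 else c) = 1 + (real k - 1) * (c::real)"
proof -
  assume i: "i < k"
  have "(\<Sum>j<k. if i = j then 1 else c) = 1 + (\<Sum>j\<in>{..<k}-{i}. if i = j then 1 else c)"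
    using i by (subst sum.remove[of _ i]) auto
  also have "(\<Sum>j\<in>{..<k}-{i}. if i = j then 1 else c) = (\<Sum>j\<in>{..<k}-{i}. c)"
    by (intro sum.cong) auto
  also have "\<dots> = (real k - 1) * c" using i by (simp add: of_nat_diff)
  finally show ?thesis .
qed

lemma E_inner:
  assumes nd: "\<forall>i\<in>{..<k}. uu r i \<noteq> 0"
  shows "has_bochner_integral std_gauss_vec (\<lambda>x. (TT (PPv x) r)\<^sup>2) (real k * (1 + (real k - 1) * (2 / pi)))"
proof -
  have n1: "norm (uu r i) = 1" if "i < k" for i using uu_01[OF that, of r] nd that by auto
  have eq: "(TT (PPv x) r)\<^sup>2 = (\<Sum>i<k. \<Sum>j<k. \<bar>x \<bullet> uu r i\<bar> * \<bar>x \<bullet> uu r j\<bar>)" for x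
  proof -
    have "TT (PPv x) r = TT x r" by (rule TT_PPv[symmetric])
    then show ?thesis by (simp add: TT_def power2_eq_square sum_product)
  qed
  have hb: "has_bochner_integral std_gauss_vec (\<lambda>x. \<Sum>i<k. \<Sum>j<k. \<bar>x \<bullet> uu r i\<bar> * \<bar>x \<bullet> uu r j\<bar>)
      (\<Sum>i<k. \<Sum>j<k. if i = j then 1 else 2 / pi)"
  proof (intro has_bochner_integral_sum)
    fix i j assume i: "i \<in> {..<k}" and j: "j \<in> {..<k}"
    show "has_bochner_integral std_gauss_vec (\<lambda>x. \<bar>x \<bullet> uu r i\<bar> * \<bar>x \<bullet> uu r j\<bar>) (if i = j then 1 else 2 / pi)"
    proof (cases "i = j")
      case True
      then show ?thesis using sgv_unit_sq[OF n1[of i]] i by (simp add: abs_mult_self_eq power2_eq_square)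
    next
      case False
      then show ?thesis using sgv_orth_abs2[OF card2 n1[of i] n1[of j] uu_uu[of i j r]] i j by simp
    qed
  qed
  have "(\<Sum>i<k. \<Sum>j<k. if i = j then 1 else 2 / pi) = (\<Sum>i<k. 1 + (real k - 1) * (2 / pi))"
    by (intro sum.cong refl sum_if_const) simp
  also have "\<dots> = real k * (1 + (real k - 1) * (2 / pi))" by simp
  finally show ?thesis using hb eq by simp
qed

lemma PPv_norm_sq: "(norm (PPv x))\<^sup>2 = (norm x)\<^sup>2 - (\<Sum>j<s. (x \<bullet> p j)\<^sup>2)"
proof -
  have "(norm (PPv x))\<^sup>2 = PPv x \<bullet> PPv x" by (simp add: power2_norm_eq_inner)
  also have "\<dots> = PPv x \<bullet> x"
  proof -
    have "PPv x \<bullet> (\<Sum>j<s. (x \<bullet> p j) *\<^sub>R p j) = 0"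
      by (simp add: inner_sum_right PPv_p)
    then show ?thesis by (simp add: PPv_def[of x] inner_diff_right)
  qed
  also have "\<dots> = x \<bullet> x - (\<Sum>j<s. (x \<bullet> p j)\<^sup>2)"
    by (simp add: PPv_def inner_diff_left inner_sum_left power2_eq_square inner_commute[of "p _" x])
  finally show ?thesis by (simp add: power2_norm_eq_inner)
qed

lemma E_PP: "has_bochner_integral std_gauss_vec (\<lambda>x. (norm (PPv x))\<^sup>2) (real CARD('n) - real s)"
proof -
  have n1: "norm (p j) = 1" if "j < s" for j using orthn that by (simp add: norm_eq_sqrt_inner)
  have "has_bochner_integral std_gauss_vec (\<lambda>x. (norm x)\<^sup>2 - (\<Sum>j<s. (x \<bullet> p j)\<^sup>2)) (real CARD('n) - (\<Sum>j<s. 1))"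
    by (intro has_bochner_integral_diff has_bochner_integral_sum sgv_norm_sq sgv_unit_sq n1) simp
  then show ?thesis by (simp add: PPv_norm_sq)
qed


lemma uu_meas_fst[measurable]: "(\<lambda>z. uu (fst z) i) \<in> borel_measurable (PM \<Otimes>\<^sub>M N)"
  by (rule measurable_compose[OF measurable_fst uu_meas])

lemma PPv_meas[measurable]: "PPv \<in> borel_measurable borel"
  unfolding PPv_def by measurable

lemma PPv_norm_le: "norm (PPv x) \<le> norm x"
proof -
  have "(norm (PPv x))\<^sup>2 \<le> (norm x)\<^sup>2" by (simp add: PPv_norm_sq sum_nonneg)
  then show ?thesis by (simp add: power_mono_iff)
qed

lemma f_bound: "norm ((TT (PPv x) r)\<^sup>2) \<le> norm ((real k)\<^sup>2 * (norm x)\<^sup>2)"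
proof -
  have "\<bar>TT (PPv x) r\<bar> \<le> real k * norm x"
    using TT_bound[of "PPv x" r] PPv_norm_le[of x] by (meson mult_left_mono of_nat_0_le_iff order_trans)
  then have "(TT (PPv x) r)\<^sup>2 \<le> (real k * norm x)\<^sup>2"
    by (simp add: abs_le_square_iff[symmetric] TT_nonneg)
  then show ?thesis by (simp add: power_mult_distrib)
qed

lemma hT_val:
  assumes g0: "PPv g \<noteq> 0"
  shows "hT (PPv g) = (norm (PPv g))\<^sup>2 * (real k * (1 + (real k - 1) * (2 / pi))) / (real CARD('n) - real s)"
proof -
  let ?M = "std_gauss_vec :: (real^'n) measure"
  let ?K = "real k * (1 + (real k - 1) * (2 / pi))"
  let ?g0 = "PPv g"
  interpret P: prob_space PM by (rule prob_PM)
  interpret M: prob_space ?M by (rule prob_sgv)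
  interpret PMM: pair_sigma_finite PM ?M ..
  define f where "f r x = (TT (PPv x) r)\<^sup>2" for r x
  have fm[measurable]: "(\<lambda>z. f (fst z) (snd z)) \<in> borel_measurable (PM \<Otimes>\<^sub>M ?M)"
    unfolding f_def TT_def by measurable
  have fm'[measurable]: "(\<lambda>(r, x). f r x) \<in> borel_measurable (PM \<Otimes>\<^sub>M ?M)"
    using fm by (simp add: case_prod_beta')
  have nint: "integrable ?M (\<lambda>x. (real k)\<^sup>2 * (norm x)\<^sup>2)"
    using sgv_norm_sq[where 'n = 'n] by (intro integrable_mult_right) (simp add: has_bochner_integral_iff)
  have fi: "integrable ?M (f r)" for r
  proof (rule Bochner_Integration.integrable_bound[OF nint])
    show "f r \<in> borel_measurable ?M" unfolding f_def TT_def by measurable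
    show "AE x in ?M. norm (f r x) \<le> norm ((real k)\<^sup>2 * (norm x)\<^sup>2)"
      using f_bound by (simp add: f_def)
  qed
  have int: "integrable (PM \<Otimes>\<^sub>M ?M) (\<lambda>(r, x). f r x)"
  proof (rule PMM.Fubini_integrable)
    show "integrable PM (\<lambda>r. \<integral>x. norm ((\<lambda>(r, x). f r x) (r, x)) \<partial>?M)"
    proof (rule P.integrable_const_bound[where B = "(real k)\<^sup>2 * real CARD('n)"])
      show "AE r in PM. norm (\<integral>x. norm ((\<lambda>(r, x). f r x) (r, x)) \<partial>?M) \<le> (real k)\<^sup>2 * real CARD('n)"
      proof (rule AE_I2)
        fix r
        have "norm (\<integral>x. norm (f r x) \<partial>?M) = (\<integral>x. norm (f r x) \<partial>?M)"
          by (simp add: integral_nonneg_AE)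
        also have "\<dots> \<le> (\<integral>x. (real k)\<^sup>2 * (norm x)\<^sup>2 \<partial>?M)"
        proof (rule integral_mono)
          show "integrable ?M (\<lambda>x. norm (f r x))" using fi[of r] by simp
          show "integrable ?M (\<lambda>x. (real k)\<^sup>2 * (norm x)\<^sup>2)" by (rule nint)
          show "norm (f r x) \<le> (real k)\<^sup>2 * (norm x)\<^sup>2" for x
            using f_bound[of x r] by (simp add: f_def)
        qed
        also have "\<dots> = (real k)\<^sup>2 * real CARD('n)"
          using sgv_norm_sq[where 'n = 'n] by (simp add: has_bochner_integral_iff)
        finally show "norm (\<integral>x. norm ((\<lambda>(r, x). f r x) (r, x)) \<partial>?M) \<le> (real k)\<^sup>2 * real CARD('n)" by simp
      qed
    qed measurable
  qed (auto simp: fi)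
  have fub: "(\<integral>x. (\<integral>r. f r x \<partial>PM) \<partial>?M) = (\<integral>r. (\<integral>x. f r x \<partial>?M) \<partial>PM)"
    by (rule PMM.Fubini_integral) (use int in simp)
  have g0p: "?g0 \<bullet> p j = 0" if "j < s" for j using PPv_p that by simp
  have lhs: "(\<integral>x. (\<integral>r. f r x \<partial>PM) \<partial>?M) = hT ?g0 / (norm ?g0)\<^sup>2 * (real CARD('n) - real s)"
  proof -
    have "(\<integral>r. f r x \<partial>PM) = hT ?g0 / (norm ?g0)\<^sup>2 * (norm (PPv x))\<^sup>2" for x
      unfolding f_def hT_def[symmetric] by (subst hT_W[OF _ g0p g0]) (auto simp: PPv_p)
    then have "(\<integral>x. (\<integral>r. f r x \<partial>PM) \<partial>?M) = (\<integral>x. hT ?g0 / (norm ?g0)\<^sup>2 * (norm (PPv x))\<^sup>2 \<partial>?M)"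
      by simp
    also have "\<dots> = hT ?g0 / (norm ?g0)\<^sup>2 * (real CARD('n) - real s)"
      using E_PP by (simp add: has_bochner_integral_iff)
    finally show ?thesis .
  qed
  have rhs: "(\<integral>r. (\<integral>x. f r x \<partial>?M) \<partial>PM) = ?K"
  proof -
    have "AE r in PM. (\<integral>x. f r x \<partial>?M) = ?K"
      using AE_nd by eventually_elim (use E_inner in \<open>auto simp: f_def has_bochner_integral_iff\<close>)
    then have "(\<integral>r. (\<integral>x. f r x \<partial>?M) \<partial>PM) = (\<integral>r. ?K \<partial>PM)"
      by (intro integral_cong_AE) auto
    also have "\<dots> = ?K" using P.prob_space by simp
    finally show ?thesis .
  qed
  have ds: "real CARD('n) - real s > 0" using dimk k1 by simp
  have "hT ?g0 / (norm ?g0)\<^sup>2 * (real CARD('n) - real s) = ?K" using fub lhs rhs by simp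
  then show ?thesis using ds g0 by (simp add: field_simps)
qed


lemma XX_int: "integrable PM (XX g)"
proof -
  interpret P: prob_space PM by (rule prob_PM)
  show ?thesis
  proof (rule P.integrable_const_bound[where B = "norm g * real k"])
    show "AE r in PM. norm (XX g r) \<le> norm g * real k"
    proof (rule AE_I2)
      fix r
      have nv: "norm (VV g r) \<le> sqrt (real k)" by (rule VV_norm)
      have "norm (XX g r) = \<bar>g \<bullet> VV g r\<bar> * norm (VV g r)" by (simp add: XX_def)
      also have "\<dots> \<le> (norm g * norm (VV g r)) * norm (VV g r)"
        by (intro mult_right_mono Cauchy_Schwarz_ineq2) auto
      also have "\<dots> = norm g * (norm (VV g r))\<^sup>2" by (simp add: power2_eq_square)
      also have "\<dots> \<le> norm g * (sqrt (real k))\<^sup>2"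
        by (intro mult_left_mono power_mono nv) auto
      also have "\<dots> = norm g * real k" by simp
      finally show "norm (XX g r) \<le> norm g * real k" .
    qed
  qed simp
qed

lemma EX_perp:
  assumes ap: "\<And>j. j < s \<Longrightarrow> a \<bullet> p j = 0" and ag: "a \<bullet> g = 0"
  shows "a \<bullet> integral\<^sup>L PM (XX g) = 0"
proof -
  let ?y = "integral\<^sup>L PM (XX g)"
  have hg: "hh a g = g" by (rule hh_fix[OF ag])
  have bl: "bounded_linear (hh a)" using hh_linear by (simp add: linear_conv_bounded_linear)
  have "?y = integral\<^sup>L PM (\<lambda>r. XX g (compose {..<k} (hh a) r))"
    by (rule PM_inv_integral(1)[symmetric]) simp
  also have "\<dots> = integral\<^sup>L PM (\<lambda>r. hh a (XX g r))"
    by (simp add: XX_hh[OF ap] hg)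
  also have "\<dots> = hh a ?y" by (rule integral_bounded_linear[OF bl XX_int])
  finally have "?y = hh a ?y" .
  then have "(2 * (a \<bullet> ?y) / (a \<bullet> a)) *\<^sub>R a = 0" by (simp add: hh_def[of a ?y] algebra_simps)
  then show ?thesis by (cases "a = 0") auto
qed

lemma EX_p: "j < s \<Longrightarrow> integral\<^sup>L PM (XX g) \<bullet> p j = 0"
proof -
  assume j: "j < s"
  have "integral\<^sup>L PM (XX g) \<bullet> p j = (\<integral>r. XX g r \<bullet> p j \<partial>PM)"
    using XX_int by simp
  also have "\<dots> = 0" using j by (simp add: XX_def VV_p)
  finally show ?thesis .
qed

lemma EX_g0: "integral\<^sup>L PM (XX g) \<bullet> PPv g = hT (PPv g) / real k"
proof -
  have eq: "XX g r \<bullet> PPv g = (TT (PPv g) r)\<^sup>2 / real k" for r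
  proof -
    have "XX g r \<bullet> PPv g = (PPv g \<bullet> VV (PPv g) r) * (PPv g \<bullet> VV (PPv g) r)"
      unfolding XX_def using VV_inner_PPv[of g r] VV_PPv[of g r] by (simp add: inner_commute)
    also have "\<dots> = (TT (PPv g) r)\<^sup>2 / real k"
      using k1 by (simp add: VV_inner power2_eq_square)
    finally show ?thesis .
  qed
  have "integral\<^sup>L PM (XX g) \<bullet> PPv g = (\<integral>r. XX g r \<bullet> PPv g \<partial>PM)"
    using XX_int by simp
  also have "\<dots> = (\<integral>r. (TT (PPv g) r)\<^sup>2 / real k \<partial>PM)" by (simp add: eq)
  also have "\<dots> = hT (PPv g) / real k" by (simp add: hT_def)
  finally show ?thesis .
qed

lemma EX_main:
  assumes g0: "PPv g \<noteq> 0"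
  shows "integral\<^sup>L PM (XX g) = ((1 + (real k - 1) * (2 / pi)) / (real CARD('n) - real s)) *\<^sub>R PPv g"
proof -
  let ?y = "integral\<^sup>L PM (XX g)"
  let ?g0 = "PPv g"
  define t where "t = (?y \<bullet> ?g0) / (?g0 \<bullet> ?g0)"
  define z where "z = ?y - t *\<^sub>R ?g0"
  have g0g0: "?g0 \<bullet> ?g0 \<noteq> 0" using g0 by simp
  have zp: "z \<bullet> p j = 0" if "j < s" for j
    using that by (simp add: z_def inner_diff_left EX_p PPv_p)
  have zg0: "z \<bullet> ?g0 = 0" using g0g0 by (simp add: z_def t_def inner_diff_left)
  have zg: "z \<bullet> g = 0"
  proof -
    have "g = ?g0 + (\<Sum>j<s. (g \<bullet> p j) *\<^sub>R p j)" by (simp add: PPv_def)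
    then have "z \<bullet> g = z \<bullet> (?g0 + (\<Sum>j<s. (g \<bullet> p j) *\<^sub>R p j))" by simp
    also have "\<dots> = z \<bullet> ?g0 + (\<Sum>j<s. (g \<bullet> p j) * (z \<bullet> p j))"
      by (simp only: inner_add_right inner_sum_right inner_scaleR_right)
    finally have "z \<bullet> g = z \<bullet> ?g0 + (\<Sum>j<s. (g \<bullet> p j) * (z \<bullet> p j))" .
    then show ?thesis using zg0 zp by simp
  qed
  have "z \<bullet> ?y = 0" using EX_perp[of z g] zp zg by blast
  have "z \<bullet> z = z \<bullet> ?y - t * (z \<bullet> ?g0)"
    unfolding z_def[of] by (simp only: inner_diff_right inner_scaleR_right)
  then have "z \<bullet> z = 0" using zg0 \<open>z \<bullet> ?y = 0\<close> by simp
  then have "z = 0" by simp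
  then have y: "?y = t *\<^sub>R ?g0" by (simp add: z_def)
  have "t = hT ?g0 / real k / (?g0 \<bullet> ?g0)" by (simp add: t_def EX_g0)
  also have "\<dots> = (1 + (real k - 1) * (2 / pi)) / (real CARD('n) - real s)"
    using g0 k1 by (simp add: hT_val power2_norm_eq_inner)
  finally show ?thesis using y by simp
qed

end

theorem mainTheorem4:
  fixes s q :: nat and p :: "nat \<Rightarrow> real ^ 'n::finite" and g :: "real ^ 'n"
  assumes "CARD('n) \<ge> 2"
    and "1 \<le> s" and "s < q" and "q \<le> CARD('n)"
    and "\<forall>i<s. \<forall>j<s. p i \<bullet> p j = (if i = j then 1 else 0)"
    and "perp_proj s p g \<noteq> 0"
  shows "has_bochner_integral (PiM {..<q - s} (\<lambda>_. std_gauss_vec))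
     (\<lambda>r. let us = gram_schmidt (map p [0..<s] @ map r [0..<q - s]);
              u = (\<lambda>i. us ! (s + i));
              v = (1 / sqrt (real (q - s))) *\<^sub>R (\<Sum>i<q - s. sgn (g \<bullet> u i) *\<^sub>R u i)
          in (real (CARD('n) - s) / ((2 / pi) * (real (q - s) - 1) + 1)) *\<^sub>R ((g \<bullet> v) *\<^sub>R v)
             + (\<Sum>i<s. (g \<bullet> p i) *\<^sub>R p i))
     g"
proof -
  define k where "k = q - s"
  interpret G: gsset s k p
    using assms by unfold_locales (auto simp: k_def)
  define C where "C = real (CARD('n) - s) / ((2 / pi) * (real (q - s) - 1) + 1)"
  let ?c0 = "\<Sum>i<s. (g \<bullet> p i) *\<^sub>R p i"
  have fun_eq: "(\<lambda>r. let us = gram_schmidt (map p [0..<s] @ map r [0..<q - s]);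
              u = (\<lambda>i. us ! (s + i));
              v = (1 / sqrt (real (q - s))) *\<^sub>R (\<Sum>i<q - s. sgn (g \<bullet> u i) *\<^sub>R u i)
          in (real (CARD('n) - s) / ((2 / pi) * (real (q - s) - 1) + 1)) *\<^sub>R ((g \<bullet> v) *\<^sub>R v)
             + ?c0) = (\<lambda>r. C *\<^sub>R G.XX g r + ?c0)"
    unfolding Let_def C_def k_def[symmetric] G.XX_def G.VV_def G.uu_def G.GSL_def ..
  have PMe0: "G.PM = PiM {..<k} (\<lambda>_. std_gauss_vec)" by (rule G.PM_def)
  have PMe: "PiM {..<q - s} (\<lambda>_. std_gauss_vec) = G.PM" using PMe0 by (simp add: k_def)
  have pp: "G.PPv g = perp_proj s p g" by (simp add: G.PPv_def perp_proj_def)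
  have g0: "G.PPv g \<noteq> 0" using assms(6) pp by simp
  interpret P: prob_space G.PM by (rule G.prob_PM)
  define t where "t = (1 + (real k - 1) * (2 / pi)) / (real CARD('n) - real s)"
  have hy: "has_bochner_integral G.PM (G.XX g) (t *\<^sub>R G.PPv g)"
    using G.XX_int G.EX_main[OF g0] by (simp add: has_bochner_integral_iff t_def)
  have hc: "has_bochner_integral G.PM (\<lambda>r. ?c0) ?c0"
    by (simp add: has_bochner_integral_iff P.prob_space)
  have h: "has_bochner_integral G.PM (\<lambda>r. C *\<^sub>R G.XX g r + ?c0) (C *\<^sub>R (t *\<^sub>R G.PPv g) + ?c0)"
    by (intro has_bochner_integral_add has_bochner_integral_scaleR_right hy hc)
  have ds: "real CARD('n) - real s > 0" using assms by simp
  have pos: "(2 / pi) * (real k - 1) + 1 > 0"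
  proof -
    have "real k \<ge> 1" using assms by (simp add: k_def)
    then have "(2 / pi) * (real k - 1) \<ge> 0" by (intro mult_nonneg_nonneg) auto
    then show ?thesis by linarith
  qed
  have Ct: "C * t = 1"
  proof -
    have e1: "real (CARD('n) - s) = real CARD('n) - real s" using assms by (simp add: of_nat_diff)
    have e2: "(2 / pi) * (real (q - s) - 1) + 1 = 1 + (real k - 1) * (2 / pi)" by (simp add: k_def)
    have n0: "1 + (real k - 1) * (2 / pi) \<noteq> 0" using pos by (simp add: mult.commute)
    show ?thesis unfolding C_def t_def e1 e2 using ds n0 by simp
  qed
  have "C *\<^sub>R (t *\<^sub>R G.PPv g) + ?c0 = g"
    using Ct by (simp add: G.PPv_def)
  then show ?thesis using h unfolding fun_eq PMe by simp
qed

end
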